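(* Let $n\ge3$. For a positive integer $k$ let $p_k=k\left(1-3\frac{k-1}{n-1}\right)$ and $q_k=3\left(1-15\frac{k-1}{n-1}+30\frac{(k-1)(k-2)}{(n-1)(n-2)}\right)$. Then: 1. If $1\le k_1<k_2\le n$, then $p_{k_1}q_{k_2}-p_{k_2}q_{k_1}=\frac{3(n+8)}{(n-1)^2(n-2)}(k_1-k_2)G(k_1,k_2)$. 2. If $1\le k_1<k_2<k_3\le n$, then $\sum_{i=1}^3k_i(n+2-3k_i)(k_{i+1}-k_{i+2})G(k_{i+1},k_{i+2})=0$, indices taken mod 3 ($k_4=k_1$, $k_5=k_2$). 3. If $1\le k_1<k_2<k_3<k_4\le n$ and $G(k_2,k_3)\le 0$, then (a) $k_2<\frac{n+2}3$ and $k_3>\frac{n+2}3$; (b) $p_{k_2}>0$ and $p_{k_3}<0$; (c) $G(k_1,k_2)>0$ and $G(k_3,k_4)>0$.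
   Context: For positive integers $k_1,k_2\le n$, $G(k_1,k_2)=(n+2-3k_1)(n+2-3k_2)+6(k_1-1)(k_2-1)+2(n-1)$. *)

theory Defs
  imports Complex_Main
begin

definition G :: "nat \<Rightarrow> nat \<Rightarrow> nat \<Rightarrow> real" where
  "G n k1 k2 = (real n + 2 - 3 * real k1) * (real n + 2 - 3 * real k2)
     + 6 * (real k1 - 1) * (real k2 - 1) + 2 * (real n - 1)"

definition pk :: "nat \<Rightarrow> nat \<Rightarrow> real" where
  "pk n k = real k * (1 - 3 * (real k - 1) / (real n - 1))"

definition qk :: "nat \<Rightarrow> nat \<Rightarrow> real" where
  "qk n k = 3 * (1 - 15 * (real k - 1) / (real n - 1)
     + 30 * (real k - 1) * (real k - 2) / ((real n - 1) * (real n - 2)))"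

end

theory Submission
  imports Defs
begin

lemma p1:
  fixes x a b :: real
  assumes "x \<ge> 3"
  shows "a * (1 - 3 * (a - 1) / (x - 1)) * (3 * (1 - 15 * (b - 1) / (x - 1)
     + 30 * (b - 1) * (b - 2) / ((x - 1) * (x - 2))))
   - b * (1 - 3 * (b - 1) / (x - 1)) * (3 * (1 - 15 * (a - 1) / (x - 1)
     + 30 * (a - 1) * (a - 2) / ((x - 1) * (x - 2))))
   = 3 * (x + 8) / ((x - 1)^2 * (x - 2)) * (a - b) *
     ((x + 2 - 3 * a) * (x + 2 - 3 * b) + 6 * (a - 1) * (b - 1) + 2 * (x - 1))"
proof -
  have h1: "x - 1 \<noteq> 0" and h2: "x - 2 \<noteq> 0" using assms by auto
  define u where "u = x - 1"
  define v where "v = x - 2"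
  have u: "u \<noteq> 0" and v: "v \<noteq> 0" using h1 h2 u_def v_def by auto
  have pa: "\<And>t. t * (1 - 3 * (t - 1) / u) = t * (u - 3 * t + 3) / u"
    using u by (simp add: field_simps)
  have eq: "x - 1 = u" "x - 2 = v" using u_def v_def by auto
  have qa: "\<And>t. 3 * (1 - 15 * (t - 1) / u + 30 * (t - 1) * (t - 2) / (u * v))
      = 3 * (u * v - 15 * (t - 1) * v + 30 * (t - 1) * (t - 2)) / (u * v)"
    using u v by (simp add: field_simps)
  have key: "3 * (a * (u - 3 * a + 3) * (u * v - 15 * (b - 1) * v + 30 * (b - 1) * (b - 2))
      - b * (u - 3 * b + 3) * (u * v - 15 * (a - 1) * v + 30 * (a - 1) * (a - 2)))
    = 3 * (x + 8) * (a - b) * ((x + 2 - 3 * a) * (x + 2 - 3 * b) + 6 * (a - 1) * (b - 1) + 2 * (x - 1))"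
    unfolding u_def v_def by (simp add: algebra_simps)
  have "a * (u - 3 * a + 3) / u * (3 * (u * v - 15 * (b - 1) * v + 30 * (b - 1) * (b - 2)) / (u * v))
      - b * (u - 3 * b + 3) / u * (3 * (u * v - 15 * (a - 1) * v + 30 * (a - 1) * (a - 2)) / (u * v))
    = 3 * (a * (u - 3 * a + 3) * (u * v - 15 * (b - 1) * v + 30 * (b - 1) * (b - 2))
      - b * (u - 3 * b + 3) * (u * v - 15 * (a - 1) * v + 30 * (a - 1) * (a - 2))) / (u^2 * v)"
    using u v by (simp add: field_simps power2_eq_square)
  also have "... = 3 * (x + 8) / (u^2 * v) * (a - b) *
     ((x + 2 - 3 * a) * (x + 2 - 3 * b) + 6 * (a - 1) * (b - 1) + 2 * u)"
    unfolding key eq by simp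
  finally show ?thesis unfolding eq pa qa .
qed

theorem lemma3p4:
  fixes n :: nat
  assumes "n \<ge> 3"
  shows "(\<forall>k1 k2. 1 \<le> k1 \<and> k1 < k2 \<and> k2 \<le> n \<longrightarrow>
            pk n k1 * qk n k2 - pk n k2 * qk n k1
              = 3 * (real n + 8) / ((real n - 1)^2 * (real n - 2))
                  * (real k1 - real k2) * G n k1 k2)
       \<and> (\<forall>k1 k2 k3. 1 \<le> k1 \<and> k1 < k2 \<and> k2 < k3 \<and> k3 \<le> n \<longrightarrow>
            real k1 * (real n + 2 - 3 * real k1) * (real k2 - real k3) * G n k2 k3
          + real k2 * (real n + 2 - 3 * real k2) * (real k3 - real k1) * G n k3 k1
          + real k3 * (real n + 2 - 3 * real k3) * (real k1 - real k2) * G n k1 k2 = 0)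
       \<and> (\<forall>k1 k2 k3 k4. 1 \<le> k1 \<and> k1 < k2 \<and> k2 < k3 \<and> k3 < k4 \<and> k4 \<le> n
              \<and> G n k2 k3 \<le> 0 \<longrightarrow>
            (real k2 < (real n + 2) / 3 \<and> real k3 > (real n + 2) / 3)
          \<and> (pk n k2 > 0 \<and> pk n k3 < 0)
          \<and> (G n k1 k2 > 0 \<and> G n k3 k4 > 0))"
proof (intro conjI allI impI)
  have n3: "real n \<ge> 3" using assms by simp
  fix k1 k2 :: nat
  show "pk n k1 * qk n k2 - pk n k2 * qk n k1
              = 3 * (real n + 8) / ((real n - 1)^2 * (real n - 2))
                  * (real k1 - real k2) * G n k1 k2"
    unfolding pk_def qk_def G_def by (rule p1[OF n3])
next
  fix k1 k2 k3 :: nat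
  show "real k1 * (real n + 2 - 3 * real k1) * (real k2 - real k3) * G n k2 k3
          + real k2 * (real n + 2 - 3 * real k2) * (real k3 - real k1) * G n k3 k1
          + real k3 * (real n + 2 - 3 * real k3) * (real k1 - real k2) * G n k1 k2 = 0"
    unfolding G_def by (simp add: algebra_simps)
next
  fix k1 k2 k3 k4 :: nat
  assume h: "1 \<le> k1 \<and> k1 < k2 \<and> k2 < k3 \<and> k3 < k4 \<and> k4 \<le> n \<and> G n k2 k3 \<le> 0"
  have n3: "real n \<ge> 3" using assms by simp
  define a where "a = real n + 2 - 3 * real k2"
  define b where "b = real n + 2 - 3 * real k3"
  define c where "c = real n + 2 - 3 * real k1"
  define d where "d = real n + 2 - 3 * real k4"
  have r: "1 \<le> real k1" "real k1 + 1 \<le> real k2" "real k2 + 1 \<le> real k3" "real k3 + 1 \<le> real k4"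
    using h by auto
  have ab: "b < a" "a < c" "d < b" using r unfolding a_def b_def c_def d_def by auto
  have "6 * (real k2 - 1) * (real k3 - 1) \<ge> 0" using r by simp
  moreover have "G n k2 k3 = a * b + 6 * (real k2 - 1) * (real k3 - 1) + 2 * (real n - 1)"
    unfolding G_def a_def b_def by simp
  moreover have "G n k2 k3 \<le> 0" using h by blast
  ultimately have "a * b < 0" using n3 by (smt (verit))
  hence ap: "a > 0" and bn: "b < 0" using ab
    by (auto simp: mult_less_0_iff)
  show "real k2 < (real n + 2) / 3" using ap a_def by simp
  show "real k3 > (real n + 2) / 3" using bn b_def by simp
  have pk2: "pk n k2 = real k2 * a / (real n - 1)" "pk n k3 = real k3 * b / (real n - 1)"
    unfolding pk_def a_def b_def using n3 by (simp_all add: field_simps)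
  show "pk n k2 > 0" using pk2 ap r n3 by simp
  show "pk n k3 < 0" using pk2 bn r n3 by (simp add: divide_neg_pos mult_pos_neg)
  have "c * a > 0" using ap ab by simp
  moreover have "6 * (real k1 - 1) * (real k2 - 1) \<ge> 0" using r by simp
  moreover have "G n k1 k2 = c * a + 6 * (real k1 - 1) * (real k2 - 1) + 2 * (real n - 1)"
    unfolding G_def a_def c_def by simp
  ultimately show "G n k1 k2 > 0" using n3 by (smt (verit))
  have "b * d > 0" using bn ab by (simp add: mult_neg_neg)
  moreover have "6 * (real k3 - 1) * (real k4 - 1) \<ge> 0" using r by simp
  moreover have "G n k3 k4 = b * d + 6 * (real k3 - 1) * (real k4 - 1) + 2 * (real n - 1)"
    unfolding G_def b_def d_def by simp
  ultimately show "G n k3 k4 > 0" using n3 by (smt (verit))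
qed

end
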